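(* Assume the setup of the context with $F$ formally real, and let $B$ be a $\ast$-symmetric basis of $H$. Then for every $\lambda\in\Lambda$: (a) $\chi_\lambda(h)=\chi_\lambda(h^\ast)$ for all $h\in H$; (b) $\nu(\chi_\lambda(x))\ge-a_\lambda$ for all $x\in B$, with equality for at least one $x\in B$.
   Context: Setup: $\Gamma$ totally ordered abelian group; $K$ a field with surjective valuation $\nu:K\to\Gamma\cup\{\infty\}$, valuation ring $\mathcal{O}$, maximal ideal $\mathfrak m$, formally real residue field $F=\mathcal{O}/\mathfrak m$. $H$ a finite-dimensional split semisimple symmetric $K$-algebra with trace form $\tau$; simple modules indexed by $\Lambda$, characters $\chi_\lambda$, Schur elements $c_\lambda$ with $\tau=\sum_\lambda c_\lambda^{-1}\chi_\lambda$; $a_\lambda:=-\tfrac12\nu(c_\lambda)$. $\ast$ is a $K$-linear involutive antiautomorphism of $H$; a $\ast$-symmetric basis is a basis $B$ with $B^\ast=B$ and $\tau(bc^\ast)=\delta_{bc}$. *)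

theory Defs
  imports Main "Jordan_Normal_Form.Matrix"
begin

text \<open>A (Krull) valuation nu : K -> Gamma u {infinity}, surjective onto Gamma.
  Only the values on nonzero elements matter (nu 0 = infinity is implicit).\<close>
definition is_surj_valuation :: "('k::field \<Rightarrow> 'g::linordered_ab_group_add) \<Rightarrow> bool" where
  "is_surj_valuation \<nu> \<longleftrightarrow>
     (\<forall>x y. x \<noteq> 0 \<longrightarrow> y \<noteq> 0 \<longrightarrow> \<nu> (x * y) = \<nu> x + \<nu> y) \<and>
     (\<forall>x y. x \<noteq> 0 \<longrightarrow> y \<noteq> 0 \<longrightarrow> x + y \<noteq> 0 \<longrightarrow> min (\<nu> x) (\<nu> y) \<le> \<nu> (x + y)) \<and>
     (\<forall>g. \<exists>x. x \<noteq> 0 \<and> \<nu> x = g)"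

definition val_ring :: "('k::field \<Rightarrow> 'g::linordered_ab_group_add) \<Rightarrow> 'k set" where
  "val_ring \<nu> = {x. x = 0 \<or> 0 \<le> \<nu> x}"

definition val_max_ideal :: "('k::field \<Rightarrow> 'g::linordered_ab_group_add) \<Rightarrow> 'k set" where
  "val_max_ideal \<nu> = {x. x = 0 \<or> 0 < \<nu> x}"

text \<open>The residue field O/m is formally real: -1 is not a sum of squares in O/m,
  i.e. no sum 1 + a_1^2 + ... + a_n^2 with all a_i in O lies in m.\<close>
definition formally_real_residue :: "('k::field \<Rightarrow> 'g::linordered_ab_group_add) \<Rightarrow> bool" where
  "formally_real_residue \<nu> \<longleftrightarrow>
     (\<forall>xs. set xs \<subseteq> val_ring \<nu> \<longrightarrow> 1 + sum_list (map (\<lambda>a. a ^ 2) xs) \<notin> val_max_ideal \<nu>)"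

definition is_algebra :: "('k::field \<Rightarrow> 'h::ring_1 \<Rightarrow> 'h) \<Rightarrow> bool" where
  "is_algebra sc \<longleftrightarrow> Vector_Spaces.vector_space sc \<and>
     (\<forall>k a b. sc k (a * b) = sc k a * b \<and> sc k (a * b) = a * sc k b)"

definition is_basis :: "('k::field \<Rightarrow> 'h::ring_1 \<Rightarrow> 'h) \<Rightarrow> 'h set \<Rightarrow> bool" where
  "is_basis sc B \<longleftrightarrow> finite B \<and> \<not> module.dependent sc B \<and> module.span sc B = UNIV"

text \<open>Split semisimple: the irreducible representations rho_lambda : H -> M_{d_lambda}(K),
  lambda in Lambda, are algebra homomorphisms which jointly give an algebra isomorphism
  H ~ prod_lambda M_{d_lambda}(K) (Wedderburn decomposition).\<close>
definition split_semisimple_reps ::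
  "('k::field \<Rightarrow> 'h::ring_1 \<Rightarrow> 'h) \<Rightarrow> 'l set \<Rightarrow> ('l \<Rightarrow> nat) \<Rightarrow> ('l \<Rightarrow> 'h \<Rightarrow> 'k mat) \<Rightarrow> bool" where
  "split_semisimple_reps sc \<Lambda> d \<rho> \<longleftrightarrow>
     finite \<Lambda> \<and>
     (\<forall>j\<in>\<Lambda>. 0 < d j \<and>
        (\<forall>h. \<rho> j h \<in> carrier_mat (d j) (d j)) \<and>
        (\<forall>a b. \<rho> j (a + b) = \<rho> j a + \<rho> j b) \<and>
        (\<forall>k a. \<rho> j (sc k a) = k \<cdot>\<^sub>m \<rho> j a) \<and>
        (\<forall>a b. \<rho> j (a * b) = \<rho> j a * \<rho> j b) \<and>
        \<rho> j 1 = 1\<^sub>m (d j)) \<and>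
     (\<forall>M. (\<forall>j\<in>\<Lambda>. M j \<in> carrier_mat (d j) (d j)) \<longrightarrow>
          (\<exists>!h. \<forall>j\<in>\<Lambda>. \<rho> j h = M j))"

definition mat_trace :: "'a::comm_ring_1 mat \<Rightarrow> 'a" where
  "mat_trace A = (\<Sum>i<dim_row A. A $$ (i, i))"

definition character :: "('l \<Rightarrow> 'h \<Rightarrow> 'k::field mat) \<Rightarrow> 'l \<Rightarrow> 'h \<Rightarrow> 'k" where
  "character \<rho> j h = mat_trace (\<rho> j h)"

definition symmetrizing_trace :: "('k::field \<Rightarrow> 'h::ring_1 \<Rightarrow> 'h) \<Rightarrow> ('h \<Rightarrow> 'k) \<Rightarrow> bool" where
  "symmetrizing_trace sc \<tau> \<longleftrightarrow>
     (\<forall>a b. \<tau> (a + b) = \<tau> a + \<tau> b) \<and> (\<forall>k a. \<tau> (sc k a) = k * \<tau> a) \<and>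
     (\<forall>a b. \<tau> (a * b) = \<tau> (b * a)) \<and>
     (\<forall>a. (\<forall>b. \<tau> (a * b) = 0) \<longrightarrow> a = 0)"

definition schur_elements ::
  "'l set \<Rightarrow> ('l \<Rightarrow> 'h \<Rightarrow> 'k::field mat) \<Rightarrow> ('h \<Rightarrow> 'k) \<Rightarrow> ('l \<Rightarrow> 'k) \<Rightarrow> bool" where
  "schur_elements \<Lambda> \<rho> \<tau> c \<longleftrightarrow>
     (\<forall>j\<in>\<Lambda>. c j \<noteq> 0) \<and> (\<forall>h. \<tau> h = (\<Sum>j\<in>\<Lambda>. inverse (c j) * character \<rho> j h))"

definition linear_involutive_antiaut :: "('k::field \<Rightarrow> 'h::ring_1 \<Rightarrow> 'h) \<Rightarrow> ('h \<Rightarrow> 'h) \<Rightarrow> bool" where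
  "linear_involutive_antiaut sc st \<longleftrightarrow>
     (\<forall>a b. st (a + b) = st a + st b) \<and> (\<forall>k a. st (sc k a) = sc k (st a)) \<and>
     (\<forall>a b. st (a * b) = st b * st a) \<and> (\<forall>a. st (st a) = a)"

definition star_symmetric_basis ::
  "('k::field \<Rightarrow> 'h::ring_1 \<Rightarrow> 'h) \<Rightarrow> ('h \<Rightarrow> 'k) \<Rightarrow> ('h \<Rightarrow> 'h) \<Rightarrow> 'h set \<Rightarrow> bool" where
  "star_symmetric_basis sc \<tau> st B \<longleftrightarrow>
     is_basis sc B \<and> st ` B = B \<and>
     (\<forall>b\<in>B. \<forall>c\<in>B. \<tau> (b * st c) = (if b = c then 1 else 0))"

end

theory Submission
  imports Defs
begin

lemma val_one:
  assumes "is_surj_valuation \<nu>"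
  shows "\<nu> (1::'k::field) = (0::'g::linordered_ab_group_add)"
proof -
  have "\<nu> (1 * (1::'k)) = \<nu> 1 + \<nu> 1" using assms unfolding is_surj_valuation_def
    by (metis one_neq_zero)
  thus ?thesis by simp
qed

lemma val_mult:
  assumes "is_surj_valuation \<nu>" "x \<noteq> 0" "y \<noteq> 0"
  shows "\<nu> (x * y) = \<nu> x + \<nu> y"
  using assms unfolding is_surj_valuation_def by auto

lemma val_ring_add:
  assumes "is_surj_valuation \<nu>" "x \<in> val_ring \<nu>" "y \<in> val_ring \<nu>"
  shows "x + y \<in> val_ring \<nu>"
proof (cases "x = 0 \<or> y = 0 \<or> x + y = 0")
  case True then show ?thesis using assms by (auto simp: val_ring_def)
next
  case False
  then have "min (\<nu> x) (\<nu> y) \<le> \<nu> (x + y)" using assms unfolding is_surj_valuation_def by auto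
  moreover have "0 \<le> min (\<nu> x) (\<nu> y)" using assms False by (auto simp: val_ring_def)
  ultimately show ?thesis unfolding val_ring_def using order_trans by blast
qed

lemma val_ring_mult:
  assumes "is_surj_valuation \<nu>" "x \<in> val_ring \<nu>" "y \<in> val_ring \<nu>"
  shows "x * y \<in> val_ring \<nu>"
proof (cases "x = 0 \<or> y = 0")
  case True then show ?thesis by (auto simp: val_ring_def)
next
  case False
  then show ?thesis using assms val_mult[OF assms(1), of x y] by (auto simp: val_ring_def)
qed

lemma val_ring_sum:
  assumes "is_surj_valuation \<nu>" "\<forall>s\<in>S. f s \<in> val_ring \<nu>"
  shows "sum f S \<in> val_ring \<nu>"
  using assms(2)
proof (induction S rule: infinite_finite_induct)
  case (insert x F) then show ?case using val_ring_add[OF assms(1)] by auto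
qed (auto simp: val_ring_def)

lemma sumsq_val:
  fixes f :: "'a \<Rightarrow> 'k::field" and \<nu> :: "'k \<Rightarrow> 'g::linordered_ab_group_add"
  assumes v: "is_surj_valuation \<nu>" and fr: "formally_real_residue \<nu>"
    and S: "finite S" "s0 \<in> S" "f s0 \<noteq> 0"
    and mn: "\<forall>s\<in>S. f s \<noteq> 0 \<longrightarrow> \<nu> (f s0) \<le> \<nu> (f s)"
  shows "(\<Sum>s\<in>S. f s ^ 2) \<noteq> 0 \<and> \<nu> (\<Sum>s\<in>S. f s ^ 2) = \<nu> (f s0) + \<nu> (f s0)"
proof -
  define t where "t = f s0"
  define g where "g s = f s / t" for s
  have tnz: "t \<noteq> 0" using S t_def by simp
  have gO: "g s \<in> val_ring \<nu>" if "s \<in> S" for s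
  proof (cases "f s = 0")
    case True then show ?thesis by (simp add: g_def val_ring_def)
  next
    case False
    have "g s \<noteq> 0" using False tnz by (simp add: g_def)
    moreover have "\<nu> (f s) = \<nu> (g s) + \<nu> t"
      using val_mult[OF v \<open>g s \<noteq> 0\<close> tnz] tnz by (simp add: g_def)
    moreover have "\<nu> t \<le> \<nu> (f s)" using mn that False t_def by auto
    ultimately show ?thesis by (simp add: val_ring_def)
  qed
  obtain xs where xs: "set xs = S - {s0}" "distinct xs" using finite_distinct_list S(1) by (meson finite_Diff)
  have g0: "g s0 = 1" using tnz by (simp add: g_def t_def)
  have "(\<Sum>s\<in>S. g s ^ 2) = g s0 ^ 2 + (\<Sum>s\<in>S - {s0}. g s ^ 2)"
    using S by (simp add: sum.remove)
  also have "(\<Sum>s\<in>S - {s0}. g s ^ 2) = sum_list (map (\<lambda>a. a ^ 2) (map g xs))"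
    using xs by (simp add: sum_list_distinct_conv_sum_set comp_def)
  finally have eq: "(\<Sum>s\<in>S. g s ^ 2) = 1 + sum_list (map (\<lambda>a. a ^ 2) (map g xs))" using g0 by simp
  have "set (map g xs) \<subseteq> val_ring \<nu>" using xs gO by auto
  then have nm: "(\<Sum>s\<in>S. g s ^ 2) \<notin> val_max_ideal \<nu>" using fr eq unfolding formally_real_residue_def
    by (metis list.set_map map_map)
  then have gnz: "(\<Sum>s\<in>S. g s ^ 2) \<noteq> 0" and gle: "\<not> 0 < \<nu> (\<Sum>s\<in>S. g s ^ 2)"
    by (auto simp: val_max_ideal_def)
  have "(\<Sum>s\<in>S. g s ^ 2) \<in> val_ring \<nu>"
    using val_ring_sum[OF v, of S "\<lambda>s. g s ^ 2"] val_ring_mult[OF v] gO by (simp add: power2_eq_square)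
  then have gv: "\<nu> (\<Sum>s\<in>S. g s ^ 2) = 0" using gle gnz by (auto simp: val_ring_def)
  have fe: "(\<Sum>s\<in>S. f s ^ 2) = (t * t) * (\<Sum>s\<in>S. g s ^ 2)"
    unfolding sum_distrib_left using tnz by (intro sum.cong) (auto simp: g_def power2_eq_square)
  have "\<nu> (\<Sum>s\<in>S. f s ^ 2) = \<nu> (t * t) + 0"
    unfolding fe using val_mult[OF v _ gnz, of "t*t"] tnz gv by simp
  also have "\<nu> (t*t) = \<nu> t + \<nu> t" using val_mult[OF v tnz tnz] .
  finally show ?thesis using fe tnz gnz t_def by simp
qed

lemma sumsq_min:
  fixes f :: "'a \<Rightarrow> 'k::field" and \<nu> :: "'k \<Rightarrow> 'g::linordered_ab_group_add"
  assumes "finite S" "\<exists>s\<in>S. f s \<noteq> 0"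
  shows "\<exists>s0\<in>S. f s0 \<noteq> 0 \<and> (\<forall>s\<in>S. f s \<noteq> 0 \<longrightarrow> \<nu> (f s0) \<le> \<nu> (f s))"
proof -
  have "finite (\<nu> ` f ` {s\<in>S. f s \<noteq> 0})" "\<nu> ` f ` {s\<in>S. f s \<noteq> 0} \<noteq> {}" using assms by auto
  from ex_min_if_finite[OF this] obtain s0 where "s0 \<in> S" "f s0 \<noteq> 0"
    "\<not>(\<exists>x\<in>\<nu> ` f ` {s\<in>S. f s \<noteq> 0}. x < \<nu> (f s0))" by auto
  then show ?thesis by (auto simp: not_less)
qed

lemma additive_sum:
  fixes f :: "'a::comm_monoid_add \<Rightarrow> 'b::ab_group_add"
  assumes "\<forall>a b. f (a + b) = f a + f b"
  shows "f (sum g S) = (\<Sum>s\<in>S. f (g s))"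
proof -
  have "f 0 = f 0 + f 0" using assms by (metis add_0)
  then have f0: "f 0 = 0" by simp
  show ?thesis
    by (induction S rule: infinite_finite_induct) (auto simp: f0 assms)
qed

lemma char_add:
  assumes "split_semisimple_reps sc \<Lambda> d \<rho>" "j \<in> \<Lambda>"
  shows "character \<rho> j (a + b) = character \<rho> j a + character \<rho> j b"
proof -
  have c: "\<rho> j a \<in> carrier_mat (d j) (d j)" "\<rho> j b \<in> carrier_mat (d j) (d j)"
    and p: "\<rho> j (a + b) = \<rho> j a + \<rho> j b"
    using assms unfolding split_semisimple_reps_def by auto
  show ?thesis unfolding character_def mat_trace_def p using c
    by (simp add: sum.distrib)
qed

lemma char_sc:
  assumes "split_semisimple_reps sc \<Lambda> d \<rho>" "j \<in> \<Lambda>"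
  shows "character \<rho> j (sc k a) = k * character \<rho> j a"
proof -
  have c: "\<rho> j a \<in> carrier_mat (d j) (d j)"
    and p: "\<rho> j (sc k a) = k \<cdot>\<^sub>m \<rho> j a"
    using assms unfolding split_semisimple_reps_def by auto
  show ?thesis unfolding character_def mat_trace_def p using c
    by (simp add: sum_distrib_left)
qed

theorem mainTheorem6:
  fixes \<nu> :: "'k::field \<Rightarrow> 'g::linordered_ab_group_add"
    and sc :: "'k \<Rightarrow> 'h::ring_1 \<Rightarrow> 'h"
    and \<Lambda> :: "'l set" and d :: "'l \<Rightarrow> nat" and \<rho> :: "'l \<Rightarrow> 'h \<Rightarrow> 'k mat"
    and \<tau> :: "'h \<Rightarrow> 'k" and c :: "'l \<Rightarrow> 'k"
    and st :: "'h \<Rightarrow> 'h" and B :: "'h set"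
  assumes "is_surj_valuation \<nu>"
    and "formally_real_residue \<nu>"
    and "is_algebra sc"
    and "split_semisimple_reps sc \<Lambda> d \<rho>"
    and "symmetrizing_trace sc \<tau>"
    and "schur_elements \<Lambda> \<rho> \<tau> c"
    and "linear_involutive_antiaut sc st"
    and "star_symmetric_basis sc \<tau> st B"
  shows "\<forall>j\<in>\<Lambda>.
           (\<forall>h. character \<rho> j h = character \<rho> j (st h)) \<and>
           (\<forall>x\<in>B. character \<rho> j x \<noteq> 0 \<longrightarrow>
                   \<nu> (c j) \<le> \<nu> (character \<rho> j x) + \<nu> (character \<rho> j x)) \<and>
           (\<exists>x\<in>B. character \<rho> j x \<noteq> 0 \<and>
                   \<nu> (character \<rho> j x) + \<nu> (character \<rho> j x) = \<nu> (c j))"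
proof
  fix j assume j: "j \<in> \<Lambda>"
  note v = assms(1) and fr = assms(2) and ss = assms(4)
  have md: "Modules.module sc" and scm: "\<And>k a b. sc k (a * b) = sc k a * b" "\<And>k a b. sc k (a * b) = a * sc k b"
    using assms(3) unfolding is_algebra_def module_iff_vector_space by blast+
  have tadd: "\<forall>a b. \<tau> (a + b) = \<tau> a + \<tau> b" and tsc: "\<And>k a. \<tau> (sc k a) = k * \<tau> a"
    and tcomm: "\<And>a b. \<tau> (a * b) = \<tau> (b * a)"
    using assms(5) unfolding symmetrizing_trace_def by auto
  have sadd: "\<forall>a b. st (a + b) = st a + st b" and ssc: "\<And>k a. st (sc k a) = sc k (st a)"
    and santi: "\<And>a b. st (a * b) = st b * st a" and sinv: "\<And>a. st (st a) = a"
    using assms(7) unfolding linear_involutive_antiaut_def by auto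
  have finB: "finite B" and spanB: "module.span sc B = UNIV" and stB: "st ` B = B"
    and orth: "\<And>b c. b \<in> B \<Longrightarrow> c \<in> B \<Longrightarrow> \<tau> (b * st c) = (if b = c then 1 else 0)"
    using assms(8) unfolding star_symmetric_basis_def is_basis_def by auto
  have cnz: "c j \<noteq> 0" and tauchar: "\<And>h. \<tau> h = (\<Sum>i\<in>\<Lambda>. inverse (c i) * character \<rho> i h)"
    using assms(6) j unfolding schur_elements_def by auto
  have tsum: "\<tau> (sum g S) = (\<Sum>s\<in>S. \<tau> (g s))" for g :: "'x \<Rightarrow> 'h" and S
    using additive_sum[OF tadd] .
  have ssum: "st (sum g S) = (\<Sum>s\<in>S. st (g s))" for g :: "'x \<Rightarrow> 'h" and S
    using additive_sum[OF sadd] .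
  have chadd: "\<forall>a b. character \<rho> j (a + b) = character \<rho> j a + character \<rho> j b"
    using char_add[OF ss j] by blast
  have chsum: "character \<rho> j (sum g S) = (\<Sum>s\<in>S. character \<rho> j (g s))" for g :: "'x \<Rightarrow> 'h" and S
    using additive_sum[OF chadd] .
  have chsc: "\<And>k a. character \<rho> j (sc k a) = k * character \<rho> j a"
    using char_sc[OF ss j] .

  have expand: "h = (\<Sum>v\<in>B. sc (\<tau> (h * st v)) v)" for h
  proof -
    have "h \<in> range (\<lambda>u. \<Sum>v\<in>B. sc (u v) v)"
      using Modules.module.span_finite[OF md finB] spanB by auto
    then obtain u where hu: "h = (\<Sum>v\<in>B. sc (u v) v)" by auto
    have "\<tau> (h * st w) = u w" if w: "w \<in> B" for w
    proof -
      have "\<tau> (h * st w) = (\<Sum>v\<in>B. \<tau> (sc (u v) (v * st w)))"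
        unfolding hu sum_distrib_right scm(1) by (rule tsum)
      also have "\<dots> = (\<Sum>v\<in>B. (if v = w then u v else 0))"
        using orth w by (intro sum.cong) (auto simp: tsc)
      also have "\<dots> = u w" using w finB by (simp add: sum.delta cong: if_cong)
      finally show ?thesis .
    qed
    then show ?thesis using hu by (metis (no_types, lifting) sum.cong)
  qed
  have bil: "\<tau> (x * st y) = (\<Sum>v\<in>B. \<tau> (x * st v) * \<tau> (y * st v))" for x y
  proof -
    have "st y = (\<Sum>v\<in>B. sc (\<tau> (y * st v)) (st v))"
      by (subst expand[of y]) (simp add: ssum ssc)
    then have "x * st y = (\<Sum>v\<in>B. sc (\<tau> (y * st v)) (x * st v))"
      by (simp add: sum_distrib_left scm(2))
    then show ?thesis by (simp add: tsum tsc mult.commute)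
  qed
  have t0: "\<tau> 0 = 0" using tsum[of "\<lambda>x. x" "{}"] by simp
  have st1: "st 1 = 1"
  proof -
    have "st (st 1 * 1) = st 1 * st (st 1)" by (rule santi)
    then show ?thesis by (simp add: sinv)
  qed
  have tst: "\<tau> (st x) = \<tau> x" for x
  proof -
    have "\<tau> (x * st 1) = \<tau> (1 * st x)" by (subst bil, subst (2) bil) (simp add: mult.commute)
    then show ?thesis by (simp add: st1)
  qed
  have pos: "h = 0" if h: "\<tau> (h * st h) = 0" for h
  proof (rule ccontr)
    assume hnz: "h \<noteq> 0"
    have "\<exists>v\<in>B. \<tau> (h * st v) \<noteq> 0"
    proof (rule ccontr)
      assume "\<not> ?thesis"
      then have "h = (\<Sum>v\<in>B. sc 0 v)" using expand[of h] by simp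
      then show False using hnz by (simp add: Modules.module.scale_zero_left[OF md])
    qed
    from sumsq_min[OF finB this, of \<nu>] obtain s0 where s0: "s0 \<in> B" "\<tau> (h * st s0) \<noteq> 0"
      "\<forall>s\<in>B. \<tau> (h * st s) \<noteq> 0 \<longrightarrow> \<nu> (\<tau> (h * st s0)) \<le> \<nu> (\<tau> (h * st s))" by blast
    have "(\<Sum>s\<in>B. (\<tau> (h * st s))^2) \<noteq> 0"
      using sumsq_val[OF v fr finB s0] by blast
    moreover have "\<tau> (h * st h) = (\<Sum>s\<in>B. (\<tau> (h * st s))^2)"
      by (subst bil) (simp add: power2_eq_square)
    ultimately show False using h by simp
  qed

  define M :: "'l \<Rightarrow> 'k mat" where "M i = (if i = j then 1\<^sub>m (d i) else 0\<^sub>m (d i) (d i))" for i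
  have Mc: "\<forall>i\<in>\<Lambda>. M i \<in> carrier_mat (d i) (d i)" unfolding M_def by auto
  have rcar: "\<And>i h. i \<in> \<Lambda> \<Longrightarrow> \<rho> i h \<in> carrier_mat (d i) (d i)"
    and rmul: "\<And>i a b. i \<in> \<Lambda> \<Longrightarrow> \<rho> i (a * b) = \<rho> i a * \<rho> i b"
    and uniq: "\<And>M. (\<forall>i\<in>\<Lambda>. M i \<in> carrier_mat (d i) (d i)) \<Longrightarrow> \<exists>!h. \<forall>i\<in>\<Lambda>. \<rho> i h = M i"
    using ss unfolding split_semisimple_reps_def by auto
  obtain e where e: "\<And>i. i \<in> \<Lambda> \<Longrightarrow> \<rho> i e = M i" using uniq[OF Mc] by blast
  have inj: "x = y" if "\<And>i. i \<in> \<Lambda> \<Longrightarrow> \<rho> i x = \<rho> i y" for x y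
  proof -
    have "\<forall>i\<in>\<Lambda>. \<rho> i y \<in> carrier_mat (d i) (d i)" using rcar by auto
    from uniq[OF this] that show ?thesis by metis
  qed
  have ecent: "e * h = h * e" for h
  proof (rule inj)
    fix i assume i: "i \<in> \<Lambda>"
    show "\<rho> i (e * h) = \<rho> i (h * e)"
      using rcar[OF i, of h] unfolding rmul[OF i] e[OF i] M_def by auto
  qed
  have eidem: "e * e = e"
  proof (rule inj)
    fix i assume i: "i \<in> \<Lambda>"
    show "\<rho> i (e * e) = \<rho> i e"
      unfolding rmul[OF i] e[OF i] M_def by auto
  qed
  have che: "character \<rho> i (e * x) = (if i = j then character \<rho> j x else 0)" if i: "i \<in> \<Lambda>" for i x
    using rcar[OF i, of x] unfolding character_def rmul[OF i] e[OF i] M_def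
    by (auto simp: mat_trace_def)
  have te: "\<tau> (e * x) = inverse (c j) * character \<rho> j x" for x
  proof -
    have "\<tau> (e * x) = (\<Sum>i\<in>\<Lambda>. (if i = j then inverse (c j) * character \<rho> j x else 0))"
      unfolding tauchar by (rule sum.cong) (auto simp: che)
    also have "\<dots> = inverse (c j) * character \<rho> j x"
      using j ss unfolding split_semisimple_reps_def by (simp add: sum.delta)
    finally show ?thesis .
  qed
  have cht: "character \<rho> j x = c j * \<tau> (e * x)" for x
    using te[of x] cnz by simp

  define z where "z = st e"
  have zcent: "z * h = h * z" for h
  proof -
    have "z * h = st e * st (st h)" by (simp add: z_def sinv)
    also have "\<dots> = st (st h * e)" by (simp add: santi)
    also have "\<dots> = st (e * st h)" by (simp add: ecent)
    also have "\<dots> = h * z" by (simp add: santi sinv z_def)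
    finally show ?thesis .
  qed
  have zidem: "z * z = z" by (simp add: z_def santi[symmetric] eidem)
  have stz: "st z = e" by (simp add: z_def sinv)
  have stdiff: "st (1 - a) = 1 - st a" for a
  proof -
    have "st (1 - a) + st a = st 1" using sadd by (metis diff_add_cancel)
    then show ?thesis using st1 by (simp add: eq_diff_eq)
  qed
  have e1: "e * (1 - e) = 0" "(1 - e) * e = 0" using eidem by (simp_all add: algebra_simps)
  have z1: "z * (1 - z) = 0" "(1 - z) * z = 0" using zidem by (simp_all add: algebra_simps)
  have w1: "e * (1 - z) = 0"
  proof (rule pos)
    have "st (e * (1 - z)) = (1 - e) * z" by (simp add: santi stdiff stz z_def sinv)
    then have "e * (1 - z) * st (e * (1 - z)) = e * ((1 - z) * (1 - e)) * z" by (simp add: mult.assoc)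
    also have "(1 - z) * (1 - e) = (1 - e) * (1 - z)"
      by (simp add: algebra_simps ecent)
    also have "e * ((1 - e) * (1 - z)) * z = (e * (1 - e)) * ((1 - z) * z)" by (simp add: mult.assoc)
    finally show "\<tau> (e * (1 - z) * st (e * (1 - z))) = 0" using e1 t0 by simp
  qed
  have w2: "z * (1 - e) = 0"
  proof (rule pos)
    have "st (z * (1 - e)) = (1 - z) * e" by (simp add: santi stdiff stz z_def sinv)
    then have "z * (1 - e) * st (z * (1 - e)) = z * (1 - e) * (e * (1 - z))"
      by (simp add: ecent)
    also have "\<dots> = z * ((1 - e) * e) * (1 - z)" by (simp add: mult.assoc)
    finally show "\<tau> (z * (1 - e) * st (z * (1 - e))) = 0" using e1 t0 by simp
  qed
  have ze: "z = e"
  proof -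
    have "e = e * z" using w1 by (simp add: algebra_simps)
    moreover have "z = z * e" using w2 by (simp add: algebra_simps)
    ultimately show ?thesis using ecent by metis
  qed
  have steq: "st e = e" using ze z_def by simp
  have partA: "character \<rho> j h = character \<rho> j (st h)" for h
  proof -
    have "character \<rho> j (st h) = c j * \<tau> (e * st h)" by (rule cht)
    also have "e * st h = st (h * e)" by (simp add: santi steq)
    also have "\<tau> (st (h * e)) = \<tau> (e * h)" by (simp add: tst ecent)
    finally show ?thesis using cht by metis
  qed

  have chie: "character \<rho> j e = of_nat (d j)"
    unfolding character_def e[OF j] M_def by (simp add: mat_trace_def)
  have sq: "(\<Sum>v\<in>B. (character \<rho> j v)^2) = of_nat (d j) * c j"
  proof -
    have "of_nat (d j) = character \<rho> j (\<Sum>v\<in>B. sc (\<tau> (e * st v)) v)"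
      using chie expand[of e] by simp
    also have "\<dots> = (\<Sum>v\<in>B. \<tau> (e * st v) * character \<rho> j v)" by (simp add: chsum chsc)
    also have "\<dots> = (\<Sum>v\<in>B. inverse (c j) * (character \<rho> j v)^2)"
      by (rule sum.cong) (auto simp: te partA[symmetric] power2_eq_square)
    also have "\<dots> = inverse (c j) * (\<Sum>v\<in>B. (character \<rho> j v)^2)"
      by (simp add: sum_distrib_left)
    finally show ?thesis using cnz by (simp add: field_simps)
  qed
  have dpos: "0 < d j" using ss j unfolding split_semisimple_reps_def by auto
  have vd: "of_nat (d j) \<noteq> (0::'k) \<and> \<nu> (of_nat (d j) :: 'k) = 0"
  proof -
    have "(\<Sum>s\<in>{..<d j}. (1::'k)^2) \<noteq> 0 \<and> \<nu> (\<Sum>s\<in>{..<d j}. (1::'k)^2) = \<nu> 1 + \<nu> (1::'k)"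
      by (rule sumsq_val[OF v fr]) (use dpos in auto)
    then show ?thesis using val_one[OF v] by simp
  qed
  have ex: "\<exists>v\<in>B. character \<rho> j v \<noteq> 0"
  proof (rule ccontr)
    assume "\<not> ?thesis"
    then have "(\<Sum>v\<in>B. (character \<rho> j v)^2) = 0" by simp
    then show False using sq vd cnz by simp
  qed
  from sumsq_min[OF finB ex, of \<nu>] obtain s0 where s0: "s0 \<in> B" "character \<rho> j s0 \<noteq> 0"
    "\<forall>s\<in>B. character \<rho> j s \<noteq> 0 \<longrightarrow> \<nu> (character \<rho> j s0) \<le> \<nu> (character \<rho> j s)" by blast
  have "\<nu> (\<Sum>v\<in>B. (character \<rho> j v)^2) = \<nu> (character \<rho> j s0) + \<nu> (character \<rho> j s0)"
    using sumsq_val[OF v fr finB s0] by blast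
  moreover have "\<nu> (of_nat (d j) * c j) = \<nu> (c j)"
    using val_mult[OF v _ cnz, of "of_nat (d j)"] vd by simp
  ultimately have eqv: "\<nu> (c j) = \<nu> (character \<rho> j s0) + \<nu> (character \<rho> j s0)" using sq by simp
  show "(\<forall>h. character \<rho> j h = character \<rho> j (st h)) \<and>
           (\<forall>x\<in>B. character \<rho> j x \<noteq> 0 \<longrightarrow>
                   \<nu> (c j) \<le> \<nu> (character \<rho> j x) + \<nu> (character \<rho> j x)) \<and>
           (\<exists>x\<in>B. character \<rho> j x \<noteq> 0 \<and>
                   \<nu> (character \<rho> j x) + \<nu> (character \<rho> j x) = \<nu> (c j))"
  proof (intro conjI ballI impI allI)
    fix x assume "x \<in> B" "character \<rho> j x \<noteq> 0"
    then have "\<nu> (character \<rho> j s0) \<le> \<nu> (character \<rho> j x)" using s0 by blast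
    then show "\<nu> (c j) \<le> \<nu> (character \<rho> j x) + \<nu> (character \<rho> j x)"
      unfolding eqv by (simp add: add_mono)
  next
    show "\<exists>x\<in>B. character \<rho> j x \<noteq> 0 \<and> \<nu> (character \<rho> j x) + \<nu> (character \<rho> j x) = \<nu> (c j)"
      using s0 eqv by auto
  qed (rule partA)
qed

end
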